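(* Let $(\mathcal{X},\rho,\nu)$ be a metric measure space where $\rho$ is a doubling metric and $\nu$ is a finite Borel measure. Then the set $\mathcal{F}_0$ of measurable functions with $\nu$-negligible boundary is dense in $L^1(\mathcal{X},\nu)$: for every $\eta\in L^1(\mathcal{X},\nu)$ and every $\delta>0$ there is $\eta'\in L^1(\mathcal{X},\nu)$ with $\nu(\partial_{\eta'}\mathcal{X})=0$ and $\|\eta-\eta'\|_{L^1(\mathcal{X},\nu)}<\delta$.
   Context: A metric is doubling (with doubling dimension $d$) if every open ball $B(x,r)$ can be covered by $2^d$ balls of radius $r/2$. For a measurable $\eta$, $\mathrm{margin}_\eta(x)=\inf\{\rho(x,x'):\eta(x')\ne\eta(x)\}$ (infimum of empty set $=+\infty$) and $\partial_\eta\mathcal{X}=\{x:\mathrm{margin}_\eta(x)=0\}$. $\mathcal{F}_0=\{\eta \text{ measurable}:\nu(\partial_\eta\mathcal{X})=0\}$. *)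

theory Defs
  imports "HOL-Analysis.Analysis"
begin

definition doubling_dim :: "real \<Rightarrow> ('a::metric_space) itself \<Rightarrow> bool" where
  "doubling_dim d (TYPE('a)) \<longleftrightarrow>
     (\<forall>(x::'a) r. \<exists>C. finite C \<and> real (card C) \<le> 2 powr d \<and> ball x r \<subseteq> (\<Union>c\<in>C. ball c (r/2)))"

definition doubling_metric :: "('a::metric_space) itself \<Rightarrow> bool" where
  "doubling_metric T \<longleftrightarrow> (\<exists>d. doubling_dim d T)"

text \<open>margin; the infimum of the empty set in ereal is \<infinity>.\<close>
definition margin :: "('a::metric_space \<Rightarrow> 'b) \<Rightarrow> 'a \<Rightarrow> ereal" where
  "margin \<eta> x = (INF x'\<in>{x'. \<eta> x' \<noteq> \<eta> x}. ereal (dist x x'))"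

definition boundary :: "('a::metric_space \<Rightarrow> 'b) \<Rightarrow> 'a set" where
  "boundary \<eta> = {x. margin \<eta> x = 0}"

end

theory Submission
  imports Defs
begin

lemma margin_nonneg: "0 \<le> margin f x"
  unfolding margin_def by (auto intro: INF_greatest)

lemma not_boundary_iff:
  "x \<notin> boundary f \<longleftrightarrow> (\<exists>r>0. \<forall>y. dist x y < r \<longrightarrow> f y = f x)"
proof
  assume "x \<notin> boundary f"
  then have "0 < margin f x" using margin_nonneg[of f x] unfolding boundary_def by auto
  then obtain r where r: "0 < ereal r" "ereal r < margin f x" using ereal_dense2 by blast
  show "\<exists>r>0. \<forall>y. dist x y < r \<longrightarrow> f y = f x"
  proof (intro exI[of _ r] conjI allI impI)
    show "0 < r" using r by simp
    fix y assume "dist x y < r"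
    show "f y = f x"
    proof (rule ccontr)
      assume "f y \<noteq> f x"
      then have h: "margin f x \<le> ereal (dist x y)" unfolding margin_def by (auto intro: INF_lower)
      have "ereal r < ereal (dist x y)" using r(2) h by (rule order.strict_trans2)
      then show False using \<open>dist x y < r\<close> by simp
    qed
  qed
next
  assume "\<exists>r>0. \<forall>y. dist x y < r \<longrightarrow> f y = f x"
  then obtain r where r: "r > 0" "\<And>y. dist x y < r \<Longrightarrow> f y = f x" by blast
  have "ereal r \<le> margin f x" unfolding margin_def
  proof (rule INF_greatest)
    fix y assume "y \<in> {x'. f x' \<noteq> f x}"
    then have "\<not> dist x y < r" using r(2)[of y] by auto
    then show "ereal r \<le> ereal (dist x y)" by simp
  qed
  then show "x \<notin> boundary f" using r unfolding boundary_def by auto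
qed

lemma closed_boundary: "closed (boundary f)"
proof -
  have "open (- boundary f)"
    unfolding open_dist
  proof (intro ballI)
    fix x assume "x \<in> - boundary f"
    then have "x \<notin> boundary f" by simp
    then obtain r where r: "r > 0" "\<And>y. dist x y < r \<Longrightarrow> f y = f x"
      using not_boundary_iff[of x f] by blast
    show "\<exists>e>0. \<forall>y. dist y x < e \<longrightarrow> y \<in> - boundary f"
    proof (intro exI[of _ "r/2"] conjI allI impI)
      fix y assume y: "dist y x < r/2"
      have "\<forall>z. dist y z < r/2 \<longrightarrow> f z = f y"
      proof (intro allI impI)
        fix z assume "dist y z < r/2"
        moreover have "dist x y < r/2" using y dist_commute[of y x] by simp
        ultimately have "dist x z < r" using dist_triangle[of x z y] by linarith
        moreover have "dist x y < r/2" using y dist_commute[of y x] by simp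
        then have "dist x y < r" using zero_le_dist[of x y] by linarith
        ultimately show "f z = f y" using r(2)[of z] r(2)[of y] by simp
      qed
      moreover have "r/2 > 0" using r(1) by simp
      ultimately have "y \<notin> boundary f" using not_boundary_iff[of y f] by blast
      then show "y \<in> - boundary f" by simp
    next
      show "r/2 > 0" using r(1) by simp
    qed
  qed
  then show ?thesis by (simp add: closed_def)
qed

lemma boundary_comp2: "boundary (\<lambda>x. h (f x) (g x)) \<subseteq> boundary f \<union> boundary g"
proof
  fix x assume "x \<in> boundary (\<lambda>x. h (f x) (g x))"
  show "x \<in> boundary f \<union> boundary g"
  proof (rule ccontr)
    assume "x \<notin> boundary f \<union> boundary g"
    then obtain r1 r2 where r: "r1 > 0" "\<And>y. dist x y < r1 \<Longrightarrow> f y = f x"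
      "r2 > 0" "\<And>y. dist x y < r2 \<Longrightarrow> g y = g x"
      using not_boundary_iff[of x f] not_boundary_iff[of x g] by blast
    have "\<forall>y. dist x y < min r1 r2 \<longrightarrow> h (f y) (g y) = h (f x) (g x)"
      using r(2,4) by simp
    moreover have "min r1 r2 > 0" using r(1,3) by simp
    ultimately have "x \<notin> boundary (\<lambda>x. h (f x) (g x))"
      using not_boundary_iff[of x "\<lambda>x. h (f x) (g x)"] by blast
    then show False using \<open>x \<in> boundary _\<close> by simp
  qed
qed

lemma boundary_comp1: "boundary (\<lambda>x. h (f x)) \<subseteq> boundary f"
  using boundary_comp2[of "\<lambda>a b. h a" f f] by simp

lemma boundary_const: "boundary (\<lambda>x. c) = {}"
  using not_boundary_iff[of _ "\<lambda>x. c"] zero_less_one by blast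


lemma open_const_not_boundary:
  assumes "open S" "x \<in> S" "\<And>y. y \<in> S \<Longrightarrow> g y = g x"
  shows "x \<notin> boundary g"
proof -
  obtain r where r: "r > 0" "ball x r \<subseteq> S" using assms(1,2) open_contains_ball[of S] by blast
  have "\<forall>y. dist x y < r \<longrightarrow> g y = g x"
  proof (intro allI impI)
    fix y assume "dist x y < r"
    then have "y \<in> S" using r(2) by (auto simp: subset_iff mem_ball)
    then show "g y = g x" by (rule assms(3))
  qed
  then show ?thesis using not_boundary_iff[of x g] r(1) by blast
qed

lemma indicator_open_not_boundary:
  assumes "open S" "x \<in> S"
  shows "x \<notin> boundary (indicator S :: 'a::metric_space \<Rightarrow> real)"
proof -
  obtain r where r: "r > 0" "ball x r \<subseteq> S" using assms(1,2) open_contains_ball[of S] by blast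
  have "\<forall>y. dist x y < r \<longrightarrow> (indicator S y :: real) = indicator S x"
    using r assms(2) by (auto simp: indicator_def subset_iff)
  then show ?thesis using not_boundary_iff[of x "indicator S :: 'a \<Rightarrow> real"] r(1) by blast
qed

lemma open_approx:
  fixes M :: "'a::metric_space measure"
  assumes sb: "sets M = sets borel" and fm: "finite_measure M" and U: "open U" and e: "e > 0"
  shows "\<exists>B\<in>sets M. boundary (indicator B :: 'a \<Rightarrow> real) \<in> null_sets M
           \<and> measure M ((U - B) \<union> (B - U)) < e"
proof (cases "U = UNIV")
  case True
  have "indicator UNIV = (\<lambda>x::'a. 1::real)" by (auto simp: indicator_def)
  then have "boundary (indicator UNIV :: 'a \<Rightarrow> real) = {}" by (simp add: boundary_const)
  then have "boundary (indicator UNIV :: 'a \<Rightarrow> real) \<in> null_sets M" by simp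
  moreover have "measure M ((U - UNIV) \<union> (UNIV - U)) < e" using True e by simp
  ultimately have "boundary (indicator UNIV :: 'a \<Rightarrow> real) \<in> null_sets M \<and> measure M ((U - UNIV) \<union> (UNIV - U)) < e"
    by (rule conjI)
  moreover have "UNIV \<in> sets M" using sets.top[of M] sets_eq_imp_space_eq[OF sb] by simp
  ultimately show ?thesis by (rule bexI[where x=UNIV])
next
  case False
  interpret finite_measure M by (rule fm)
  have spM: "space M = UNIV" using sets_eq_imp_space_eq[OF sb] by simp
  define f where "f x = infdist x (- U)" for x
  have fc: "continuous_on UNIV f" unfolding f_def by (intro continuous_intros)
  have fm_meas: "f \<in> borel_measurable M"
    by (subst measurable_cong_sets[OF sb refl]) (rule borel_measurable_continuous_onI[OF fc])
  have cl: "closed (- U)" "- U \<noteq> {}" using U False by auto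
  have inU: "x \<in> U \<longleftrightarrow> f x > 0" for x
    using in_closed_iff_infdist_zero[OF cl, of x] infdist_nonneg[of x "-U"] unfolding f_def
    by auto
  have setsM: "{x. P (f x)} \<in> sets M" if "{y. P y} \<in> sets borel" for P
  proof -
    have "f -` {y. P y} \<inter> space M \<in> sets M" using fm_meas that by (rule measurable_sets)
    then show ?thesis using spM by (simp add: vimage_def)
  qed
  define D where "D n = {x. 0 < f x \<and> f x \<le> 1 / Suc n}" for n :: nat
  have Dsets: "range D \<subseteq> sets M" unfolding D_def by (auto intro!: setsM)
  have fr: "1 / real (Suc n) \<le> 1 / real (Suc m)" if "m \<le> n" for m n
    using that by (intro divide_left_mono) auto
  have Ddec: "decseq D" unfolding D_def decseq_def
  proof (intro allI impI subsetI)
    fix m n x assume "m \<le> n" "x \<in> {x. 0 < f x \<and> f x \<le> 1 / real (Suc n)}"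
    then show "x \<in> {x. 0 < f x \<and> f x \<le> 1 / real (Suc m)}" using fr[of m n] by auto
  qed
  have Dint: "(\<Inter>n. D n) = {}"
  proof (rule ccontr)
    assume "(\<Inter>n. D n) \<noteq> {}"
    then obtain x where "x \<in> (\<Inter>n. D n)" by blast
    then have x: "\<And>n. x \<in> D n" by simp
    have fx: "f x > 0" using x[of 0] unfolding D_def by simp
    obtain n :: nat where "1 / f x < n" using reals_Archimedean2 by blast
    then have "1 < real n * f x" using fx by (simp add: field_simps)
    then have "1 < real (Suc n) * f x" using fx by (simp add: algebra_simps)
    then have "1 / Suc n < f x" by (simp add: field_simps)
    then show False using x[of n] unfolding D_def by simp
  qed
  have "(\<lambda>n. measure M (D n)) \<longlonglongrightarrow> 0"
    using finite_Lim_measure_decseq[OF Dsets Ddec] Dint by simp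
  from LIMSEQ_D[OF this e] obtain N where "norm (measure M (D N) - 0) < e" by blast
  then have N: "measure M (D N) < e" by simp
  interpret Df: finite_measure "distr M borel f"
    by (rule finite_measure_distr) (use fm_meas in simp)
  have "countable {t. measure (distr M borel f) {t} \<noteq> 0}" by (rule Df.countable_support)
  moreover have "measure (distr M borel f) {t} = measure M {x. f x = t}" for t
    using measure_distr[OF fm_meas, of "{t}"] spM by (simp add: vimage_def)
  ultimately have cnt: "countable {t. measure M {x. f x = t} \<noteq> 0}" by simp
  have "uncountable {0<..<1 / real (Suc N)}" by (simp add: uncountable_open_interval)
  then have "\<not> {0<..<1 / real (Suc N)} \<subseteq> {t. measure M {x. f x = t} \<noteq> 0}"
    using cnt countable_subset by metis
  then obtain t where t: "t \<in> {0<..<1 / real (Suc N)}" "t \<notin> {t. measure M {x. f x = t} \<noteq> 0}"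
    by (meson subsetI)
  then have t: "t \<in> {0<..<1 / real (Suc N)}" "measure M {x. f x = t} = 0" by simp_all
  define B where "B = {x. t < f x}"
  have Bopen: "open B" unfolding B_def using fc by (intro open_Collect_less continuous_intros)
  have Lopen: "open {x. f x < t}" using fc by (intro open_Collect_less continuous_intros)
  have Bsets: "B \<in> sets M" unfolding sb by (rule borel_open[OF Bopen])
  have bsub: "boundary (indicator B :: 'a \<Rightarrow> real) \<subseteq> {x. f x = t}"
  proof
    fix x assume xb: "x \<in> boundary (indicator B :: 'a \<Rightarrow> real)"
    show "x \<in> {x. f x = t}"
    proof (rule ccontr)
      assume "x \<notin> {x. f x = t}"
      then consider "t < f x" | "f x < t" by fastforce
      then show False
      proof cases
        case 1
        then show False using indicator_open_not_boundary[OF Bopen] xb B_def by auto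
      next
        case 2
        have "x \<notin> boundary (indicator B :: 'a \<Rightarrow> real)"
          by (rule open_const_not_boundary[OF Lopen]) (use 2 in \<open>auto simp: B_def indicator_def\<close>)
        then show False using xb by simp
      qed
    qed
  qed
  have lvl: "{x. f x = t} \<in> null_sets M"
    using t(2) setsM[of "\<lambda>y. y = t"] by (auto simp: null_sets_def emeasure_eq_measure)
  have bnull: "boundary (indicator B :: 'a \<Rightarrow> real) \<in> null_sets M"
  proof -
    have "boundary (indicator B :: 'a \<Rightarrow> real) \<in> sets borel" by (rule borel_closed[OF closed_boundary])
    then show ?thesis using null_sets_subset[OF lvl _ bsub] sb by simp
  qed
  have t0: "0 < t" "t < 1 / real (Suc N)" using t(1) by auto
  have BU: "B \<subseteq> U"
  proof
    fix x assume "x \<in> B"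
    then have "t < f x" unfolding B_def by simp
    then show "x \<in> U" using inU[of x] t0 by simp
  qed
  have "(U - B) \<union> (B - U) \<subseteq> D N"
  proof
    fix x assume "x \<in> (U - B) \<union> (B - U)"
    then have "x \<in> U" "x \<notin> B" using BU by auto
    then have "0 < f x" "f x \<le> t" using inU[of x] unfolding B_def by auto
    then show "x \<in> D N" using t0 unfolding D_def by simp
  qed
  moreover have "D N \<in> sets M" using Dsets rangeI[of D N] by (rule subsetD)
  ultimately have le: "measure M ((U - B) \<union> (B - U)) \<le> measure M (D N)"
    by (rule finite_measure_mono)
  have lt: "measure M ((U - B) \<union> (B - U)) < e" using le N by linarith
  have "boundary (indicator B :: 'a \<Rightarrow> real) \<in> null_sets M \<and> measure M ((U - B) \<union> (B - U)) < e"
    using bnull lt by (rule conjI)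
  then show ?thesis using Bsets by (rule bexI[where x=B])
qed


lemma null_boundary_sub:
  assumes "boundary g \<subseteq> N" "N \<in> null_sets M" "sets M = sets borel"
  shows "boundary g \<in> null_sets M"
proof -
  have "boundary g \<in> sets borel" by (rule borel_closed[OF closed_boundary])
  then have "boundary g \<in> sets M" using assms(3) by simp
  then show ?thesis using null_sets_subset[OF assms(2) _ assms(1)] by simp
qed

lemma nb_union:
  fixes M :: "'a::metric_space measure" and B :: "nat \<Rightarrow> 'a set"
  assumes sb: "sets M = sets borel"
    and B: "\<And>i. boundary (indicator (B i) :: 'a \<Rightarrow> real) \<in> null_sets M"
  shows "boundary (indicator (\<Union>i<n. B i) :: 'a \<Rightarrow> real) \<in> null_sets M"
proof (induction n)
  case 0
  have "indicator (\<Union>i<0. B i) = (\<lambda>x::'a. 0::real)" by (rule ext) simp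
  then show ?case by (simp add: boundary_const)
next
  case (Suc n)
  have eq: "indicator (\<Union>i<Suc n. B i) = (\<lambda>x::'a. max (indicator (\<Union>i<n. B i) x) (indicator (B n) x) :: real)"
    by (rule ext) (auto simp: indicator_def lessThan_Suc)
  have "boundary (indicator (\<Union>i<Suc n. B i) :: 'a \<Rightarrow> real)
      \<subseteq> boundary (indicator (\<Union>i<n. B i) :: 'a \<Rightarrow> real) \<union> boundary (indicator (B n) :: 'a \<Rightarrow> real)"
    unfolding eq by (rule boundary_comp2)
  moreover have "boundary (indicator (\<Union>i<n. B i) :: 'a \<Rightarrow> real) \<union> boundary (indicator (B n) :: 'a \<Rightarrow> real) \<in> null_sets M"
    using Suc.IH B[of n] by (rule null_sets.Un)
  ultimately show ?case using sb by (rule null_boundary_sub)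
qed

definition approxQ :: "('a::metric_space) measure \<Rightarrow> 'a set \<Rightarrow> bool" where
  "approxQ M A \<longleftrightarrow> (\<forall>e>0. \<exists>B\<in>sets M. boundary (indicator B :: 'a \<Rightarrow> real) \<in> null_sets M
           \<and> measure M ((A - B) \<union> (B - A)) < e)"

lemma set_approx:
  fixes M :: "'a::metric_space measure"
  assumes sb: "sets M = sets borel" and fm: "finite_measure M" and A: "A \<in> sets M"
  shows "approxQ M A"
proof -
  interpret finite_measure M by (rule fm)
  have sig: "sets M = sigma_sets UNIV {S. open S}" using sb sets_borel by simp
  have "Int_stable {S::'a set. open S}" unfolding Int_stable_def by auto
  moreover have "{S::'a set. open S} \<subseteq> Pow UNIV" by simp
  moreover have "A \<in> sigma_sets UNIV {S. open S}" using A sig by simp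
  ultimately show ?thesis
  proof (induction rule: sigma_sets_induct_disjoint)
    case (basic U)
    then show ?case unfolding approxQ_def using open_approx[OF sb fm] by simp
  next
    case empty
    have "indicator {} = (\<lambda>x::'a. 0::real)" by (rule ext) simp
    then have "boundary (indicator {} :: 'a \<Rightarrow> real) = {}" by (simp add: boundary_const)
    then show ?case unfolding approxQ_def by (intro allI impI bexI[where x="{}"]) auto
  next
    case (compl A)
    show ?case unfolding approxQ_def
    proof (intro allI impI)
      fix e :: real assume e: "e > 0"
      obtain B where B: "B \<in> sets M" "boundary (indicator B :: 'a \<Rightarrow> real) \<in> null_sets M"
        "measure M ((A - B) \<union> (B - A)) < e"
        using compl.IH e unfolding approxQ_def by blast
      have eq: "indicator (UNIV - B) = (\<lambda>x::'a. 1 - indicator B x :: real)"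
        by (rule ext) (simp add: indicator_def)
      have "boundary (indicator (UNIV - B) :: 'a \<Rightarrow> real) \<subseteq> boundary (indicator B :: 'a \<Rightarrow> real)"
        unfolding eq by (rule boundary_comp1)
      then have b1: "boundary (indicator (UNIV - B) :: 'a \<Rightarrow> real) \<in> null_sets M"
        using B(2) sb by (rule null_boundary_sub)
      have "((UNIV - A) - (UNIV - B)) \<union> ((UNIV - B) - (UNIV - A)) = (A - B) \<union> (B - A)" by blast
      then have b2: "measure M (((UNIV - A) - (UNIV - B)) \<union> ((UNIV - B) - (UNIV - A))) < e"
        using B(3) by simp
      have b3: "UNIV - B \<in> sets M" using B(1) sets.compl_sets[of B M] sets_eq_imp_space_eq[OF sb] by simp
      show "\<exists>B'\<in>sets M. boundary (indicator B' :: 'a \<Rightarrow> real) \<in> null_sets M \<and>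
          measure M (((UNIV - A) - B') \<union> (B' - (UNIV - A))) < e"
        using conjI[OF b1 b2] b3 by (rule bexI[where x="UNIV - B"])
    qed
  next
    case (union A)
    have As: "A i \<in> sets M" for i using union.hyps(2) sig by auto
    show ?case unfolding approxQ_def
    proof (intro allI impI)
      fix e :: real assume e: "e > 0"
      define Y where "Y N = (\<Union>i<N. A i)" for N
      have Ys: "range Y \<subseteq> sets M" unfolding Y_def using As by auto
      have Yinc: "incseq Y" unfolding Y_def incseq_def by (intro allI impI UN_mono) auto
      have YU: "(\<Union>N. Y N) = (\<Union>i. A i)" unfolding Y_def by auto
      have "(\<lambda>N. measure M (Y N)) \<longlonglongrightarrow> measure M (\<Union>i. A i)"
        using finite_Lim_measure_incseq[OF Ys Yinc] YU by simp
      from LIMSEQ_D[OF this, of "e/2"] e obtain N where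
        N: "norm (measure M (Y N) - measure M (\<Union>i. A i)) < e/2" by auto
      have UAs: "(\<Union>i. A i) \<in> sets M" using As by auto
      have YNs: "Y N \<in> sets M" using Ys by auto
      have YsubU: "Y N \<subseteq> (\<Union>i. A i)" unfolding Y_def by auto
      have m1: "measure M ((\<Union>i. A i) - Y N) < e/2"
      proof -
        have N': "\<bar>measure M (Y N) - measure M (\<Union>i. A i)\<bar> < e/2" using N by simp
        show ?thesis
          using finite_measure_Diff[OF UAs YNs YsubU] N'
            abs_ge_minus_self[of "measure M (Y N) - measure M (\<Union>i. A i)"] by linarith
      qed
      define e' where "e' = e / (2 * (real N + 1))"
      have e': "e' > 0" unfolding e'_def using e by simp
      have "\<forall>i. \<exists>B. B \<in> sets M \<and> boundary (indicator B :: 'a \<Rightarrow> real) \<in> null_sets M \<and>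
          measure M ((A i - B) \<union> (B - A i)) < e'"
        using union.IH e' unfolding approxQ_def by blast
      then obtain B where B: "\<And>i. B i \<in> sets M" "\<And>i. boundary (indicator (B i) :: 'a \<Rightarrow> real) \<in> null_sets M"
        "\<And>i. measure M ((A i - B i) \<union> (B i - A i)) < e'"
        by metis
      define C where "C = (\<Union>i<N. B i)"
      have Cs: "C \<in> sets M" unfolding C_def using B(1) by auto
      have Cb: "boundary (indicator C :: 'a \<Rightarrow> real) \<in> null_sets M"
        unfolding C_def using sb B(2) by (rule nb_union)
      define S where "S i = (A i - B i) \<union> (B i - A i)" for i
      have Ss: "S i \<in> sets M" for i unfolding S_def using As B(1) by auto
      have sub: "((\<Union>i. A i) - C) \<union> (C - (\<Union>i. A i)) \<subseteq> ((\<Union>i. A i) - Y N) \<union> (\<Union>i<N. S i)"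
        unfolding C_def Y_def S_def by blast
      have "measure M (((\<Union>i. A i) - C) \<union> (C - (\<Union>i. A i)))
          \<le> measure M (((\<Union>i. A i) - Y N) \<union> (\<Union>i<N. S i))"
        using sub by (rule finite_measure_mono) (use UAs YNs Ss in auto)
      also have "\<dots> \<le> measure M ((\<Union>i. A i) - Y N) + measure M (\<Union>i<N. S i)"
        by (rule measure_Un_le) (use UAs YNs Ss in auto)
      also have "measure M (\<Union>i<N. S i) \<le> (\<Sum>i<N. measure M (S i))"
        by (rule measure_UNION_le) (use Ss in auto)
      also have "(\<Sum>i<N. measure M (S i)) \<le> real N * e'"
        using sum_bounded_above[of "{..<N}" "\<lambda>i. measure M (S i)" e'] B(3) unfolding S_def
        by (simp add: less_imp_le)
      also have "real N * e' < e/2"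
      proof -
        have "real N * e' = (real N / (real N + 1)) * (e/2)" unfolding e'_def by (simp add: field_simps)
        also have "\<dots> < 1 * (e/2)" using e by (intro mult_strict_right_mono) auto
        finally show ?thesis by simp
      qed
      finally have "measure M (((\<Union>i. A i) - C) \<union> (C - (\<Union>i. A i))) < e" using m1 by linarith
      then show "\<exists>B\<in>sets M. boundary (indicator B :: 'a \<Rightarrow> real) \<in> null_sets M \<and>
          measure M (((\<Union>i. A i) - B) \<union> (B - (\<Union>i. A i))) < e"
        using conjI[OF Cb] Cs by (intro bexI[where x=C])
    qed
  qed
qed


theorem proposition2:
  fixes M :: "('a::metric_space) measure" and \<eta> :: "'a \<Rightarrow> real" and \<delta> :: real
  assumes "doubling_metric TYPE('a)"
    and "sets M = sets borel"
    and "finite_measure M"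
    and "integrable M \<eta>"
    and "\<delta> > 0"
  shows "\<exists>\<eta>'. integrable M \<eta>' \<and> boundary \<eta>' \<in> null_sets M
           \<and> (\<integral>x. \<bar>\<eta> x - \<eta>' x\<bar> \<partial>M) < \<delta>"
proof -
  note sb = assms(2) and fm = assms(3)
  interpret finite_measure M by (rule fm)
  have spM: "space M = UNIV" using sets_eq_imp_space_eq[OF sb] by simp
  define P where "P f \<longleftrightarrow> (\<forall>e>0. \<exists>g. integrable M g \<and> boundary g \<in> null_sets M
           \<and> (\<integral>x. \<bar>f x - g x\<bar> \<partial>M) < e)" for f :: "'a \<Rightarrow> real"
  have "P \<eta>" using assms(4)
  proof (induct rule: integrable_induct)
    case (base A c)
    show ?case unfolding P_def
    proof (intro allI impI)
      fix e :: real assume e: "e > 0"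
      have e': "e / (\<bar>c\<bar> + 1) > 0" using e by simp
      obtain B where B: "B \<in> sets M" "boundary (indicator B :: 'a \<Rightarrow> real) \<in> null_sets M"
        "measure M ((A - B) \<union> (B - A)) < e / (\<bar>c\<bar> + 1)"
        using set_approx[OF sb fm base(1)] e' unfolding approxQ_def by blast
      define g where "g x = indicator B x *\<^sub>R c" for x
      have gi: "integrable M g" unfolding g_def
        using B(1) spM by (intro integrable_scaleR_left) (simp add: integrable_indicator_iff emeasure_eq_measure)
      have "boundary g \<subseteq> boundary (indicator B :: 'a \<Rightarrow> real)"
        unfolding g_def by (rule boundary_comp1)
      then have gb: "boundary g \<in> null_sets M" using B(2) sb by (rule null_boundary_sub)
      have pw: "\<bar>indicator A x *\<^sub>R c - g x\<bar> = indicator ((A - B) \<union> (B - A)) x * \<bar>c\<bar>" for x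
        unfolding g_def by (simp add: indicator_def)
      have SDs: "(A - B) \<union> (B - A) \<in> sets M" using base(1) B(1) by auto
      have "(\<integral>x. \<bar>indicator A x *\<^sub>R c - g x\<bar> \<partial>M) = (\<integral>x. indicator ((A - B) \<union> (B - A)) x * \<bar>c\<bar> \<partial>M)"
        using pw by simp
      also have "\<dots> = measure M ((A - B) \<union> (B - A)) * \<bar>c\<bar>"
        using spM by simp
      also have "\<dots> \<le> e / (\<bar>c\<bar> + 1) * \<bar>c\<bar>"
        using B(3) by (intro mult_right_mono) auto
      also have "\<dots> < e"
      proof -
        have "e / (\<bar>c\<bar> + 1) * \<bar>c\<bar> = e * (\<bar>c\<bar> / (\<bar>c\<bar> + 1))" by simp
        also have "\<dots> < e * 1" using e by (intro mult_strict_left_mono) auto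
        finally show ?thesis by simp
      qed
      finally show "\<exists>g. integrable M g \<and> boundary g \<in> null_sets M \<and>
          (\<integral>x. \<bar>indicator A x *\<^sub>R c - g x\<bar> \<partial>M) < e"
        using gi gb by blast
    qed
  next
    case (add f g)
    show ?case unfolding P_def
    proof (intro allI impI)
      fix e :: real assume e: "e > 0"
      obtain g1 where g1: "integrable M g1" "boundary g1 \<in> null_sets M" "(\<integral>x. \<bar>f x - g1 x\<bar> \<partial>M) < e/2"
        using add(2) e unfolding P_def by (meson half_gt_zero)
      obtain g2 where g2: "integrable M g2" "boundary g2 \<in> null_sets M" "(\<integral>x. \<bar>g x - g2 x\<bar> \<partial>M) < e/2"
        using add(4) e unfolding P_def by (meson half_gt_zero)
      have gi: "integrable M (\<lambda>x. g1 x + g2 x)" using g1(1) g2(1) by simp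
      have "boundary (\<lambda>x. g1 x + g2 x) \<subseteq> boundary g1 \<union> boundary g2" by (rule boundary_comp2)
      moreover have "boundary g1 \<union> boundary g2 \<in> null_sets M" using g1(2) g2(2) by (rule null_sets.Un)
      ultimately have gb: "boundary (\<lambda>x. g1 x + g2 x) \<in> null_sets M" using sb by (rule null_boundary_sub)
      have i1: "integrable M (\<lambda>x. \<bar>f x - g1 x\<bar>)" using add(1) g1(1) by simp
      have i2: "integrable M (\<lambda>x. \<bar>g x - g2 x\<bar>)" using add(3) g2(1) by simp
      have i3: "integrable M (\<lambda>x. \<bar>f x + g x - (g1 x + g2 x)\<bar>)" using add(1) add(3) g1(1) g2(1) by simp
      have "(\<integral>x. \<bar>f x + g x - (g1 x + g2 x)\<bar> \<partial>M) \<le> (\<integral>x. \<bar>f x - g1 x\<bar> + \<bar>g x - g2 x\<bar> \<partial>M)"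
        using i3 i1 i2 by (intro Bochner_Integration.integral_mono) auto
      also have "\<dots> = (\<integral>x. \<bar>f x - g1 x\<bar> \<partial>M) + (\<integral>x. \<bar>g x - g2 x\<bar> \<partial>M)"
        using i1 i2 by (rule Bochner_Integration.integral_add)
      also have "\<dots> < e" using g1(3) g2(3) by linarith
      finally show "\<exists>h. integrable M h \<and> boundary h \<in> null_sets M \<and>
          (\<integral>x. \<bar>f x + g x - h x\<bar> \<partial>M) < e"
        using gi gb by blast
    qed
  next
    case (lim f s)
    show ?case unfolding P_def
    proof (intro allI impI)
      fix e :: real assume e: "e > 0"
      have conv: "(\<lambda>i. \<integral>x. \<bar>f x - s i x\<bar> \<partial>M) \<longlonglongrightarrow> (\<integral>x. 0 \<partial>M)"
      proof (rule integral_dominated_convergence[where w="\<lambda>x. 3 * \<bar>f x\<bar>"])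
        show "(\<lambda>x. 0::real) \<in> borel_measurable M" by simp
        show "\<And>i. (\<lambda>x. \<bar>f x - s i x\<bar>) \<in> borel_measurable M"
          using lim(1) lim(5) by (intro borel_measurable_abs borel_measurable_diff) auto
        show "integrable M (\<lambda>x. 3 * \<bar>f x\<bar>)" using lim(5) by simp
        show "AE x in M. (\<lambda>i. \<bar>f x - s i x\<bar>) \<longlonglongrightarrow> 0"
        proof (rule AE_I2)
          fix x assume x: "x \<in> space M"
          have "(\<lambda>i. f x - s i x) \<longlonglongrightarrow> f x - f x"
            using lim(3)[OF x] by (intro tendsto_diff tendsto_const)
          then have "(\<lambda>i. \<bar>f x - s i x\<bar>) \<longlonglongrightarrow> \<bar>f x - f x\<bar>" by (rule tendsto_rabs)
          then show "(\<lambda>i. \<bar>f x - s i x\<bar>) \<longlonglongrightarrow> 0" by simp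
        qed
        show "\<And>i. AE x in M. norm \<bar>f x - s i x\<bar> \<le> 3 * \<bar>f x\<bar>"
        proof (rule AE_I2)
          fix i x assume x: "x \<in> space M"
          have "\<bar>s i x\<bar> \<le> 2 * \<bar>f x\<bar>" using lim(4)[OF x, of i] by simp
          then show "norm \<bar>f x - s i x\<bar> \<le> 3 * \<bar>f x\<bar>" by simp
        qed
      qed
      then have conv0: "(\<lambda>i. \<integral>x. \<bar>f x - s i x\<bar> \<partial>M) \<longlonglongrightarrow> 0" by simp
      from LIMSEQ_D[OF conv0, of "e/2"] e obtain i where
        i: "norm ((\<integral>x. \<bar>f x - s i x\<bar> \<partial>M) - 0) < e/2" by auto
      then have i': "(\<integral>x. \<bar>f x - s i x\<bar> \<partial>M) < e/2" by simp
      obtain g where g: "integrable M g" "boundary g \<in> null_sets M" "(\<integral>x. \<bar>s i x - g x\<bar> \<partial>M) < e/2"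
        using lim(2)[of i] e unfolding P_def by (meson half_gt_zero)
      have i1: "integrable M (\<lambda>x. \<bar>f x - s i x\<bar>)" using lim(5) lim(1)[of i] by simp
      have i2: "integrable M (\<lambda>x. \<bar>s i x - g x\<bar>)" using lim(1)[of i] g(1) by simp
      have i3: "integrable M (\<lambda>x. \<bar>f x - g x\<bar>)" using lim(5) g(1) by simp
      have "(\<integral>x. \<bar>f x - g x\<bar> \<partial>M) \<le> (\<integral>x. \<bar>f x - s i x\<bar> + \<bar>s i x - g x\<bar> \<partial>M)"
        using i3 i1 i2 by (intro Bochner_Integration.integral_mono) auto
      also have "\<dots> = (\<integral>x. \<bar>f x - s i x\<bar> \<partial>M) + (\<integral>x. \<bar>s i x - g x\<bar> \<partial>M)"
        using i1 i2 by (rule Bochner_Integration.integral_add)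
      also have "\<dots> < e" using i' g(3) by linarith
      finally show "\<exists>g. integrable M g \<and> boundary g \<in> null_sets M \<and>
          (\<integral>x. \<bar>f x - g x\<bar> \<partial>M) < e"
        using g(1,2) by blast
    qed
  qed
  then show ?thesis using assms(5) unfolding P_def by blast
qed

end
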